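(* Let $\mathcal{Q}=(X,\mathcal{R},C)$ be a chemical reaction system with food set $F\subseteq X$, and let $(X_1,\mathcal{R}_1),\dots,(X_k,\mathcal{R}_k)$ be inhibition pairs with $X_i\subseteq X$, $\mathcal{R}_i\subseteq\mathcal{R}$. For every subset $J\subseteq[k]$, if $s(\mathcal{R}^J\cap\mathcal{R}_J)$ is non-empty, then $s(\mathcal{R}^J\cap\mathcal{R}_J)$ is a $u$-RAF.
   Context: A chemical reaction system (CRS) $\mathcal{Q}=(X,\mathcal{R},C)$ consists of a finite set $X$ of molecule types, a finite set $\mathcal{R}$ of reactions, each reaction $r$ having a set of reactants $\rho(r)\subseteq X$ and a set of products $\pi(r)\subseteq X$, and a catalysis set $C\subseteq X\times\mathcal{R}$ ($(x,r)\in C$ means $x$ catalyzes $r$); a food set $F\subseteq X$ is given. For $\mathcal{R}'\subseteq\mathcal{R}$, the closure $\mathrm{cl}_{\mathcal{R}'}(F)$ is the smallest set $W\subseteq X$ with $F\subseteq W$ such that $\pi(r)\subseteq W$ for every $r\in\mathcal{R}'$ with $\rho(r)\subseteq W$. A set $\mathcal{R}'\subseteq\mathcal{R}$ is an RAF if it is non-empty and every $r\in\mathcal{R}'$ satisfies $\rho(r)\subseteq\mathrm{cl}_{\mathcal{R}'}(F)$ and there is $x\in\mathrm{cl}_{\mathcal{R}'}(F)$ with $(x,r)\in C$. A union of RAFs is an RAF; for $\mathcal{R}^*\subseteq\mathcal{R}$, $s(\mathcal{R}^* )$ denotes the unique maximal RAF contained in $\mathcal{R}^*$ (the union of all RAFs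 contained in $\mathcal{R}^*$), or $\emptyset$ if $\mathcal{R}^*$ contains no RAF. The support of a reaction is ${\rm supp}(r)=\rho(r)\cup\pi(r)$, and ${\rm supp}(\mathcal{R}')=\bigcup_{r\in\mathcal{R}'}{\rm supp}(r)$. Inhibition pairs $(X_i,\mathcal{R}_i)$, $i\in[k]=\{1,\dots,k\}$, mean every molecule in $X_i$ inhibits every reaction in $\mathcal{R}_i$. A subset $\mathcal{R}'\subseteq\mathcal{R}$ is a $u$-RAF (uninhibited RAF) if (u-1) $\mathcal{R}'$ is an RAF, and (u-2) for every $i\in[k]$, $\mathcal{R}'\cap\mathcal{R}_i\neq\emptyset$ implies ${\rm supp}(\mathcal{R}')\cap X_i=\emptyset$. For $J\subseteq[k]$: $\mathcal{R}^J=\{r\in\mathcal{R}: {\rm supp}(r)\cap X_j=\emptyset \text{ for all } j\notin J\}$ and $\mathcal{R}_J=\{r\in\mathcal{R}: r\notin\mathcal{R}_j\text{ for all } j\in J\}$. *)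

theory Defs
  imports Main
begin

text \<open>A chemical reaction system: molecule types X, reactions R with reactants rho r
and products pi r, catalysis set C, food set F.\<close>

definition CRS :: "'x set \<Rightarrow> 'r set \<Rightarrow> ('r \<Rightarrow> 'x set) \<Rightarrow> ('r \<Rightarrow> 'x set) \<Rightarrow> ('x \<times> 'r) set \<Rightarrow> 'x set \<Rightarrow> bool" where
  "CRS X R rho pi C F \<longleftrightarrow> finite X \<and> finite R \<and>
     (\<forall>r\<in>R. rho r \<subseteq> X \<and> pi r \<subseteq> X) \<and> C \<subseteq> X \<times> R \<and> F \<subseteq> X"

definition closure :: "('r \<Rightarrow> 'x set) \<Rightarrow> ('r \<Rightarrow> 'x set) \<Rightarrow> 'r set \<Rightarrow> 'x set \<Rightarrow> 'x set" where
  "closure rho pi R' F = \<Inter> {W. F \<subseteq> W \<and> (\<forall>r\<in>R'. rho r \<subseteq> W \<longrightarrow> pi r \<subseteq> W)}"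

definition is_RAF :: "'r set \<Rightarrow> ('r \<Rightarrow> 'x set) \<Rightarrow> ('r \<Rightarrow> 'x set) \<Rightarrow> ('x \<times> 'r) set \<Rightarrow> 'x set \<Rightarrow> 'r set \<Rightarrow> bool" where
  "is_RAF R rho pi C F R' \<longleftrightarrow> R' \<subseteq> R \<and> R' \<noteq> {} \<and>
     (\<forall>r\<in>R'. rho r \<subseteq> closure rho pi R' F \<and> (\<exists>x\<in>closure rho pi R' F. (x, r) \<in> C))"

text \<open>Maximal RAF contained in Rs (union of all RAFs contained in Rs; empty if none).\<close>
definition maxRAF :: "'r set \<Rightarrow> ('r \<Rightarrow> 'x set) \<Rightarrow> ('r \<Rightarrow> 'x set) \<Rightarrow> ('x \<times> 'r) set \<Rightarrow> 'x set \<Rightarrow> 'r set \<Rightarrow> 'r set" where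
  "maxRAF R rho pi C F Rs = \<Union> {R'. R' \<subseteq> Rs \<and> is_RAF R rho pi C F R'}"

definition supp :: "('r \<Rightarrow> 'x set) \<Rightarrow> ('r \<Rightarrow> 'x set) \<Rightarrow> 'r \<Rightarrow> 'x set" where
  "supp rho pi r = rho r \<union> pi r"

definition supp_set :: "('r \<Rightarrow> 'x set) \<Rightarrow> ('r \<Rightarrow> 'x set) \<Rightarrow> 'r set \<Rightarrow> 'x set" where
  "supp_set rho pi R' = (\<Union>r\<in>R'. supp rho pi r)"

definition is_uRAF :: "'r set \<Rightarrow> ('r \<Rightarrow> 'x set) \<Rightarrow> ('r \<Rightarrow> 'x set) \<Rightarrow> ('x \<times> 'r) set \<Rightarrow> 'x set
     \<Rightarrow> nat \<Rightarrow> (nat \<Rightarrow> 'x set) \<Rightarrow> (nat \<Rightarrow> 'r set) \<Rightarrow> 'r set \<Rightarrow> bool" where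
  "is_uRAF R rho pi C F k Xi Ri R' \<longleftrightarrow> is_RAF R rho pi C F R' \<and>
     (\<forall>i\<in>{1..k}. R' \<inter> Ri i \<noteq> {} \<longrightarrow> supp_set rho pi R' \<inter> Xi i = {})"

definition R_upper :: "'r set \<Rightarrow> ('r \<Rightarrow> 'x set) \<Rightarrow> ('r \<Rightarrow> 'x set) \<Rightarrow> nat \<Rightarrow> (nat \<Rightarrow> 'x set) \<Rightarrow> nat set \<Rightarrow> 'r set" where
  "R_upper R rho pi k Xi J = {r\<in>R. \<forall>j\<in>{1..k} - J. supp rho pi r \<inter> Xi j = {}}"

definition R_lower :: "'r set \<Rightarrow> (nat \<Rightarrow> 'r set) \<Rightarrow> nat set \<Rightarrow> 'r set" where
  "R_lower R Ri J = {r\<in>R. \<forall>j\<in>J. r \<notin> Ri j}"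

end

theory Submission
  imports Defs
begin

lemma closure_mono: "A \<subseteq> B \<Longrightarrow> closure rho pi A F \<subseteq> closure rho pi B F"
  unfolding closure_def by (intro Inter_anti_mono) auto

lemma maxRAF_sub:
  "R' \<subseteq> Rs \<Longrightarrow> is_RAF R rho pi C F R' \<Longrightarrow> R' \<subseteq> maxRAF R rho pi C F Rs"
  unfolding maxRAF_def by (rule Union_upper) simp

lemma maxRAF_le: "maxRAF R rho pi C F Rs \<subseteq> Rs"
  unfolding maxRAF_def by (rule Union_least) simp

lemma maxRAF_leR: "maxRAF R rho pi C F Rs \<subseteq> R"
  unfolding maxRAF_def is_RAF_def by (rule Union_least) simp

lemma maxRAF_RAF:
  assumes "maxRAF R rho pi C F Rs \<noteq> {}"
  shows "is_RAF R rho pi C F (maxRAF R rho pi C F Rs)"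
proof -
  let ?M = "maxRAF R rho pi C F Rs"
  have "rho r \<subseteq> closure rho pi ?M F \<and> (\<exists>x\<in>closure rho pi ?M F. (x, r) \<in> C)"
    if r: "r \<in> ?M" for r
  proof -
    from r obtain R' where R': "R' \<subseteq> Rs" "is_RAF R rho pi C F R'" "r \<in> R'"
      unfolding maxRAF_def by auto
    have cl: "closure rho pi R' F \<subseteq> closure rho pi ?M F"
      by (rule closure_mono[OF maxRAF_sub[OF R'(1,2)]])
    from R'(2,3) have a: "rho r \<subseteq> closure rho pi R' F"
      and b: "\<exists>x\<in>closure rho pi R' F. (x, r) \<in> C"
      unfolding is_RAF_def by auto
    from b obtain x where "x \<in> closure rho pi R' F" "(x, r) \<in> C" by auto
    with a cl show ?thesis by auto
  qed
  then show ?thesis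
    unfolding is_RAF_def using assms maxRAF_leR[of R rho pi C F Rs] by blast
qed

theorem theorem1:
  fixes X :: "'x set" and R :: "'r set" and rho pi :: "'r \<Rightarrow> 'x set"
    and C :: "('x \<times> 'r) set" and F :: "'x set"
    and k :: nat and Xi :: "nat \<Rightarrow> 'x set" and Ri :: "nat \<Rightarrow> 'r set" and J :: "nat set"
  assumes "CRS X R rho pi C F"
    and "\<forall>i\<in>{1..k}. Xi i \<subseteq> X \<and> Ri i \<subseteq> R"
    and "J \<subseteq> {1..k}"
    and "maxRAF R rho pi C F (R_upper R rho pi k Xi J \<inter> R_lower R Ri J) \<noteq> {}"
  shows "is_uRAF R rho pi C F k Xi Ri (maxRAF R rho pi C F (R_upper R rho pi k Xi J \<inter> R_lower R Ri J))"
proof -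
  let ?M = "maxRAF R rho pi C F (R_upper R rho pi k Xi J \<inter> R_lower R Ri J)"
  have M: "?M \<subseteq> R_upper R rho pi k Xi J \<inter> R_lower R Ri J"
    by (rule maxRAF_le)
  have "supp_set rho pi ?M \<inter> Xi i = {}" if i: "i \<in> {1..k}" and ne: "?M \<inter> Ri i \<noteq> {}" for i
  proof -
    from ne obtain r where r: "r \<in> ?M" "r \<in> Ri i" by auto
    from r(1) M have "r \<in> R_lower R Ri J" by auto
    with r(2) have iJ: "i \<notin> J" unfolding R_lower_def by auto
    have "supp rho pi r' \<inter> Xi i = {}" if "r' \<in> ?M" for r'
    proof -
      from that M have "r' \<in> R_upper R rho pi k Xi J" by auto
      then show ?thesis using i iJ unfolding R_upper_def by auto
    qed
    then show ?thesis unfolding supp_set_def by auto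
  qed
  then show ?thesis
    unfolding is_uRAF_def using maxRAF_RAF[OF assms(4)] by auto
qed

end
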